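(* In the 2-sided error regime, there exists an algorithm that finds a realized spanning tree with high probability, using $O(m\log m)$ queries in a moldgraph of $m$ edges.
   Context: Problem (graph connectivity with noisy queries): a graph $G=(V,E)$, the moldgraph, with $m$ edges is given. An adversary selects an arbitrary connected spanning subgraph of $G$ to be realized. The algorithm may query an oracle on any edge $e$ (``Is $e$ realized?'') and receives ``Yes''/``No''; each query costs $1$, and answers to distinct queries (including repeated queries of the same edge) are independent. Goal: output a spanning tree of $G$ all of whose edges are realized. In the 2-sided error regime, each answer is wrong with a constant probability $p<1/2$. ``With high probability'' means with probability tending to $1$ as $m\to\infty$. *)

theory Defs
  imports "HOL-Probability.Probability"
begin

definition is_graph :: "nat set \<Rightarrow> nat set set \<Rightarrow> bool" where
  "is_graph V E \<longleftrightarrow> finite V \<and> (\<forall>e\<in>E. e \<subseteq> V \<and> card e = 2)"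

definition adj :: "nat set set \<Rightarrow> (nat \<times> nat) set" where
  "adj F = {(u, v). {u, v} \<in> F}"

definition connected_on :: "nat set \<Rightarrow> nat set set \<Rightarrow> bool" where
  "connected_on V F \<longleftrightarrow> (\<forall>u\<in>V. \<forall>v\<in>V. (u, v) \<in> (adj F)\<^sup>*)"

(* T is a spanning tree of (V, E): connected spanning subgraph, acyclic
   (every edge is a bridge) *)
definition spanning_tree :: "nat set \<Rightarrow> nat set set \<Rightarrow> nat set set \<Rightarrow> bool" where
  "spanning_tree V E T \<longleftrightarrow> T \<subseteq> E \<and> connected_on V T \<and>
     (\<forall>e\<in>T. \<forall>u v. e = {u, v} \<longrightarrow> (u, v) \<notin> (adj (T - {e}))\<^sup>*)"

datatype step = Query "nat set" | Output "nat set set"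

(* An algorithm: given the moldgraph (V,E) and the history of
   (queried edge, answer) pairs, chooses (a distribution over) the next step. *)
type_synonym algorithm = "nat set \<Rightarrow> nat set set \<Rightarrow> (nat set \<times> bool) list \<Rightarrow> step pmf"

(* Execution against realized edge set R with noise p, with a budget of at
   most k further queries.  Each query answer is independently flipped with
   probability p.  Result None = budget exceeded. *)
primrec run_alg :: "real \<Rightarrow> nat set \<Rightarrow> nat set set \<Rightarrow> nat set set \<Rightarrow> algorithm
    \<Rightarrow> nat \<Rightarrow> (nat set \<times> bool) list \<Rightarrow> nat set set option pmf" where
  "run_alg p V E R alg 0 hist =
     bind_pmf (alg V E hist) (\<lambda>s. case s of Output T \<Rightarrow> return_pmf (Some T)
                                         | Query e \<Rightarrow> return_pmf None)"
| "run_alg p V E R alg (Suc k) hist =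
     bind_pmf (alg V E hist) (\<lambda>s. case s of Output T \<Rightarrow> return_pmf (Some T)
        | Query e \<Rightarrow> bind_pmf (bernoulli_pmf p)
             (\<lambda>flip. run_alg p V E R alg k (hist @ [(e, (e \<in> R) \<noteq> flip)])))"

end

theory Submission imports Defs begin

lemma prob_bind_bern:
  assumes "0 \<le> p" "p \<le> 1"
  shows "measure_pmf.prob (bind_pmf (bernoulli_pmf p) F) A =
         p * measure_pmf.prob (F True) A + (1 - p) * measure_pmf.prob (F False) A"
proof -
  have "emeasure (measure_pmf (bind_pmf (bernoulli_pmf p) F)) A =
        emeasure (measure_pmf (F True)) A * ennreal p + emeasure (measure_pmf (F False)) A * ennreal (1 - p)"
    using assms by (simp add: nn_integral_bernoulli_pmf)
  then show ?thesis using assms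
    by (simp add: measure_pmf.emeasure_eq_measure ennreal_mult'[symmetric] ennreal_plus[symmetric] del: ennreal_plus)
qed

definition cnt :: "nat set \<Rightarrow> (nat set \<times> bool) list \<Rightarrow> nat" where
  "cnt e h = length (filter (\<lambda>x. fst x = e) h)"
definition ncount :: "nat set \<Rightarrow> bool \<Rightarrow> (nat set \<times> bool) list \<Rightarrow> nat" where
  "ncount e b h = length (filter (\<lambda>x. x = (e, b)) h)"
definition accepted :: "nat set set \<Rightarrow> (nat set \<times> bool) list \<Rightarrow> nat set set" where
  "accepted E h = {e\<in>E. ncount e False h < ncount e True h}"
definition sp :: "real \<Rightarrow> real" where "sp p = 1/2 + 2*p*(1-p)"
definition cc :: "real \<Rightarrow> real" where "cc p = - 2 / ln (sp p)"
definition kk :: "real \<Rightarrow> nat \<Rightarrow> nat" where "kk p m = nat \<lceil>cc p * ln (real m)\<rceil>"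
definition stepf :: "real \<Rightarrow> nat set \<Rightarrow> nat set set \<Rightarrow> (nat set \<times> bool) list \<Rightarrow> step" where
  "stepf p V E h = (if \<exists>e\<in>E. cnt e h < kk p (card E)
      then Query (SOME e. e\<in>E \<and> cnt e h < kk p (card E))
      else Output (SOME T. spanning_tree V E T \<and> T \<subseteq> accepted E h))"
definition myalg :: "real \<Rightarrow> algorithm" where "myalg p V E h = return_pmf (stepf p V E h)"
definition phi :: "real \<Rightarrow> nat set set \<Rightarrow> nat set set \<Rightarrow> nat \<Rightarrow> (nat set \<times> bool) list \<Rightarrow> real" where
  "phi p R E k h = (\<Sum>e\<in>E. (2-2*p)^ncount e (e\<notin>R) h * (1/(2-2*p))^ncount e (e\<in>R) h * sp p ^ (k - cnt e h))"

lemma sp_bounds: assumes "0 \<le> p" "p < 1/2" shows "0 < sp p" "sp p < 1"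
proof -
  have "0 < (1 - 2*p)^2" using assms by simp
  then show "sp p < 1" unfolding sp_def by (simp add: power2_eq_square algebra_simps)
  have "0 \<le> p*(1-p)" using assms by simp
  then show "0 < sp p" unfolding sp_def by simp
qed

lemma step_ineq:
  fixes t u s p :: real
  assumes "0 \<le> p" "p \<le> 1" "0 \<le> t" "0 \<le> u" "0 \<le> s" "s \<le> 1" "p*t + (1-p)*u = s"
  shows "p * (t^(w+1) * u^r * s^(k - (c+1))) + (1-p) * (t^w * u^(r+1) * s^(k-(c+1)))
          \<le> t^w * u^r * s^(k-c)"
proof -
  define X where "X = t^w * u^r * s^(k-(c+1))"
  have X0: "0 \<le> X" unfolding X_def using assms by simp
  have "p * (t^(w+1) * u^r * s^(k - (c+1))) + (1-p) * (t^w * u^(r+1) * s^(k-(c+1))) = X * (p*t + (1-p)*u)"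
    unfolding X_def by (simp add: algebra_simps)
  also have "\<dots> = X * s" using assms by simp
  also have "\<dots> \<le> t^w * u^r * s^(k-c)"
  proof (cases "c < k")
    case True
    then have "k - c = Suc (k - (c+1))" by simp
    then show ?thesis unfolding X_def by (simp add: algebra_simps)
  next
    case False
    then have "k - c = 0" "k - (c+1) = 0" by auto
    then show ?thesis unfolding X_def using X0 assms
      by (simp add: X_def mult_left_le)
  qed
  finally show ?thesis .
qed

lemma bridge_remove:
  assumes "connected_on V T" "e \<in> T" "e = {u,v}" "(u,v) \<in> (adj (T-{e}))\<^sup>*"
  shows "connected_on V (T-{e})"
proof -
  define r where "r = adj (T-{e})"
  have conv: "r\<inverse> = r" unfolding r_def adj_def by (auto simp: insert_commute)
  have uv: "(u,v) \<in> r\<^sup>*" using assms(4) r_def by simp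
  have vu: "(v,u) \<in> r\<^sup>*"
    using rtrancl_converseI[OF uv] conv by simp
  have "adj T \<subseteq> r\<^sup>*"
  proof
    fix z assume "z \<in> adj T"
    then obtain x y where z: "z = (x,y)" and xy: "{x,y} \<in> T" unfolding adj_def by auto
    show "z \<in> r\<^sup>*"
    proof (cases "{x,y} = e")
      case True
      then have "{x,y} = {u,v}" using assms(3) by simp
      then have "(x=u \<and> y=v) \<or> (x=v \<and> y=u)" by (simp add: doubleton_eq_iff)
      then show ?thesis using uv vu z by auto
    next
      case False
      then have "(x,y) \<in> r" using xy unfolding r_def adj_def by auto
      then show ?thesis using z by auto
    qed
  qed
  then have "(adj T)\<^sup>* \<subseteq> r\<^sup>*" by (rule rtrancl_subset_rtrancl)
  then show ?thesis using assms(1) unfolding connected_on_def r_def by blast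
qed

lemma exists_st:
  assumes "finite R" "connected_on V R" "R \<subseteq> E"
  shows "\<exists>T. spanning_tree V E T \<and> T \<subseteq> R"
proof -
  obtain T where T: "T \<subseteq> R \<and> connected_on V T"
    and mn: "\<forall>T'. T' \<subseteq> R \<and> connected_on V T' \<longrightarrow> card T \<le> card T'"
    using ex_has_least_nat[of "\<lambda>T. T \<subseteq> R \<and> connected_on V T" R card] assms by auto
  have fT: "finite T" using T assms(1) finite_subset by auto
  have "\<forall>e\<in>T. \<forall>u v. e = {u, v} \<longrightarrow> (u, v) \<notin> (adj (T - {e}))\<^sup>*"
  proof (intro ballI allI impI notI)
    fix e u v assume e: "e \<in> T" "e = {u,v}" "(u, v) \<in> (adj (T - {e}))\<^sup>*"
    have c: "connected_on V (T-{e})" using T by (intro bridge_remove[OF _ e]) simp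
    have s: "T-{e} \<subseteq> R" using T by auto
    have "card T \<le> card (T-{e})" using mn[rule_format, OF conjI[OF s c]] .
    moreover have "card (T-{e}) < card T" by (rule card_Diff1_less[OF fT e(1)])
    ultimately show False by simp
  qed
  then show ?thesis using T assms(3) unfolding spanning_tree_def by auto
qed

lemma run_zero: "run_alg p V E R (myalg p) 0 h =
  (case stepf p V E h of Output T \<Rightarrow> return_pmf (Some T) | Query e \<Rightarrow> return_pmf None)"
  by (simp add: myalg_def bind_return_pmf)

lemma run_suc: "run_alg p V E R (myalg p) (Suc B) h =
  (case stepf p V E h of Output T \<Rightarrow> return_pmf (Some T)
     | Query e \<Rightarrow> bind_pmf (bernoulli_pmf p) (\<lambda>flip. run_alg p V E R (myalg p) B (h @ [(e, (e \<in> R) \<noteq> flip)])))"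
  by (simp add: myalg_def bind_return_pmf)

lemma cnt_snoc: "cnt e (h @ [(e0,b)]) = cnt e h + (if e0 = e then 1 else 0)"
  by (simp add: cnt_def)

lemma sum_dec:
  assumes "finite E" "e0 \<in> E" "cnt e0 h < k"
  shows "(\<Sum>e\<in>E. k - cnt e (h @ [(e0,b)])) + 1 = (\<Sum>e\<in>E. k - cnt e h)"
proof -
  have "(\<Sum>e\<in>E. k - cnt e (h @ [(e0,b)])) = (k - cnt e0 (h @ [(e0,b)])) + (\<Sum>e\<in>E-{e0}. k - cnt e (h @ [(e0,b)]))"
    using assms by (simp add: sum.remove)
  also have "(\<Sum>e\<in>E-{e0}. k - cnt e (h @ [(e0,b)])) = (\<Sum>e\<in>E-{e0}. k - cnt e h)"
    by (rule sum.cong) (auto simp: cnt_snoc)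
  finally have 1: "(\<Sum>e\<in>E. k - cnt e (h @ [(e0,b)])) = (k - cnt e0 (h @ [(e0,b)])) + (\<Sum>e\<in>E-{e0}. k - cnt e h)" .
  have 2: "(\<Sum>e\<in>E. k - cnt e h) = (k - cnt e0 h) + (\<Sum>e\<in>E-{e0}. k - cnt e h)"
    using assms by (simp add: sum.remove)
  show ?thesis using 1 2 assms(3) by (simp add: cnt_snoc)
qed

lemma query_props:
  assumes "stepf p V E h = Query e0"
  shows "e0 \<in> E" "cnt e0 h < kk p (card E)"
proof -
  have ex: "\<exists>e\<in>E. cnt e h < kk p (card E)" using assms unfolding stepf_def by (auto split: if_splits)
  then have "e0 = (SOME e. e\<in>E \<and> cnt e h < kk p (card E))" using assms unfolding stepf_def by auto
  then have "e0\<in>E \<and> cnt e0 h < kk p (card E)" using someI_ex[of "\<lambda>e. e\<in>E \<and> cnt e h < kk p (card E)"] ex by auto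
  then show "e0 \<in> E" "cnt e0 h < kk p (card E)" by auto
qed

lemma output_props:
  assumes "stepf p V E h = Output T"
  shows "\<forall>e\<in>E. kk p (card E) \<le> cnt e h" "T = (SOME T. spanning_tree V E T \<and> T \<subseteq> accepted E h)"
  using assms unfolding stepf_def by (auto split: if_splits simp: not_less)

lemma no_none:
  assumes "finite E" "(\<Sum>e\<in>E. kk p (card E) - cnt e h) \<le> B"
  shows "None \<notin> set_pmf (run_alg p V E R (myalg p) B h)"
  using assms(2)
proof (induction B arbitrary: h)
  case 0
  then have all: "\<forall>e\<in>E. kk p (card E) \<le> cnt e h" using assms(1) by auto
  show ?case
  proof (cases "stepf p V E h")
    case (Query e0)
    have "e0 \<in> E" "cnt e0 h < kk p (card E)" using query_props[OF Query] by auto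
    then have False using all by (meson not_le)
    then show ?thesis ..
  next
    case (Output T)
    then show ?thesis unfolding run_zero by auto
  qed
next
  case (Suc B)
  show ?case
  proof (cases "stepf p V E h")
    case (Query e0)
    note q = query_props[OF Query]
    have "\<And>b. None \<notin> set_pmf (run_alg p V E R (myalg p) B (h @ [(e0, b)]))"
    proof -
      fix b
      have "(\<Sum>e\<in>E. kk p (card E) - cnt e (h @ [(e0,b)])) + 1 = (\<Sum>e\<in>E. kk p (card E) - cnt e h)"
        using sum_dec[OF assms(1) q] .
      then have "(\<Sum>e\<in>E. kk p (card E) - cnt e (h @ [(e0,b)])) \<le> B" using Suc.prems by linarith
      then show "None \<notin> set_pmf (run_alg p V E R (myalg p) B (h @ [(e0, b)]))" by (rule Suc.IH)
    qed
    then show ?thesis unfolding run_suc Query by auto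
  next
    case (Output T)
    then show ?thesis unfolding run_suc by auto
  qed
qed


lemma phi_nonneg: assumes "0 \<le> p" "p < 1/2" shows "0 \<le> phi p R E k h"
  using sp_bounds[OF assms] assms unfolding phi_def by (auto intro!: sum_nonneg)

lemma term_ge1:
  fixes p :: real
  assumes "0 \<le> p" "p < 1/2" "r \<le> w"
  shows "1 \<le> (2-2*p)^w * (1/(2-2*p))^r"
proof -
  have t1: "1 \<le> 2-2*p" using assms by simp
  have "(2-2*p)^r * (1/(2-2*p))^r = 1" using t1 by (simp add: power_mult_distrib[symmetric])
  moreover have "(2-2*p)^r \<le> (2-2*p)^w" by (rule power_increasing[OF assms(3) t1])
  moreover have "0 \<le> (1/(2-2*p))^r" using t1 by simp
  ultimately show ?thesis by (metis mult_right_mono)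
qed

lemma output_case:
  assumes g: "is_graph V E" "R \<subseteq> E" "connected_on V R" and p: "0 \<le> p" "p < 1/2"
    and o: "stepf p V E h = Output T"
  shows "measure_pmf.prob (return_pmf (Some T)) (- {Some T | T. spanning_tree V E T \<and> T \<subseteq> R})
           \<le> phi p R E (kk p (card E)) h"
proof (cases "\<forall>e\<in>E. ncount e (e\<notin>R) h < ncount e (e\<in>R) h")
  case True
  have acc: "accepted E h = R"
  proof
    show "accepted E h \<subseteq> R"
    proof
      fix e assume "e \<in> accepted E h"
      then have "e \<in> E" "ncount e False h < ncount e True h" unfolding accepted_def by auto
      then show "e \<in> R" using True by (metis less_asym)
    qed
    show "R \<subseteq> accepted E h"
    proof
      fix e assume "e \<in> R"
      then show "e \<in> accepted E h" using True g(2) unfolding accepted_def by force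
    qed
  qed
  have fE: "finite E" using g(1) unfolding is_graph_def by (meson finite_Pow_iff finite_subset subsetI PowI)
  have "\<exists>T. spanning_tree V E T \<and> T \<subseteq> R" using exists_st[OF finite_subset[OF g(2) fE] g(3) g(2)] .
  then have "spanning_tree V E T \<and> T \<subseteq> R" using output_props(2)[OF o] acc someI_ex[of "\<lambda>T. spanning_tree V E T \<and> T \<subseteq> R"] by simp
  then have "Some T \<in> {Some T | T. spanning_tree V E T \<and> T \<subseteq> R}" by auto
  then have "measure_pmf.prob (return_pmf (Some T)) (- {Some T | T. spanning_tree V E T \<and> T \<subseteq> R}) = 0"
    by (simp add: measure_pmf_zero_iff)
  then show ?thesis using phi_nonneg[OF p] by simp
next
  case False
  then obtain e where e: "e \<in> E" "ncount e (e\<in>R) h \<le> ncount e (e\<notin>R) h" by (auto simp: not_less)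
  have fE: "finite E" using g(1) unfolding is_graph_def by (meson finite_Pow_iff finite_subset subsetI PowI)
  have c: "kk p (card E) - cnt e h = 0" using output_props(1)[OF o] e(1) by auto
  have "1 \<le> (2-2*p)^ncount e (e\<notin>R) h * (1/(2-2*p))^ncount e (e\<in>R) h * sp p ^ (kk p (card E) - cnt e h)"
    using term_ge1[OF p e(2)] c by simp
  also have "\<dots> \<le> phi p R E (kk p (card E)) h" unfolding phi_def
    using sp_bounds[OF p] p fE e(1)
    by (intro member_le_sum[where f = "\<lambda>e. (2-2*p)^ncount e (e\<notin>R) h * (1/(2-2*p))^ncount e (e\<in>R) h * sp p ^ (kk p (card E) - cnt e h)"]) auto
  finally show ?thesis using measure_pmf.prob_le_1 by (meson order_trans)
qed


lemma phi_split:
  assumes "finite E" "e0 \<in> E"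
  shows "phi p R E k (h @ [(e0, x)]) =
    (2-2*p)^ncount e0 (e0\<notin>R) (h @ [(e0, x)]) * (1/(2-2*p))^ncount e0 (e0\<in>R) (h @ [(e0, x)]) * sp p ^ (k - cnt e0 (h @ [(e0, x)]))
    + (\<Sum>e\<in>E-{e0}. (2-2*p)^ncount e (e\<notin>R) h * (1/(2-2*p))^ncount e (e\<in>R) h * sp p ^ (k - cnt e h))"
proof -
  have "phi p R E k (h @ [(e0, x)]) =
    (2-2*p)^ncount e0 (e0\<notin>R) (h @ [(e0, x)]) * (1/(2-2*p))^ncount e0 (e0\<in>R) (h @ [(e0, x)]) * sp p ^ (k - cnt e0 (h @ [(e0, x)]))
    + (\<Sum>e\<in>E-{e0}. (2-2*p)^ncount e (e\<notin>R) (h @ [(e0, x)]) * (1/(2-2*p))^ncount e (e\<in>R) (h @ [(e0, x)]) * sp p ^ (k - cnt e (h @ [(e0, x)])))"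
    unfolding phi_def using assms by (simp add: sum.remove)
  also have "(\<Sum>e\<in>E-{e0}. (2-2*p)^ncount e (e\<notin>R) (h @ [(e0, x)]) * (1/(2-2*p))^ncount e (e\<in>R) (h @ [(e0, x)]) * sp p ^ (k - cnt e (h @ [(e0, x)])))
     = (\<Sum>e\<in>E-{e0}. (2-2*p)^ncount e (e\<notin>R) h * (1/(2-2*p))^ncount e (e\<in>R) h * sp p ^ (k - cnt e h))"
    by (rule sum.cong) (auto simp: ncount_def cnt_def)
  finally show ?thesis .
qed

lemma phi_split0:
  assumes "finite E" "e0 \<in> E"
  shows "phi p R E k h =
    (2-2*p)^ncount e0 (e0\<notin>R) h * (1/(2-2*p))^ncount e0 (e0\<in>R) h * sp p ^ (k - cnt e0 h)
    + (\<Sum>e\<in>E-{e0}. (2-2*p)^ncount e (e\<notin>R) h * (1/(2-2*p))^ncount e (e\<in>R) h * sp p ^ (k - cnt e h))"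
  unfolding phi_def using assms by (simp add: sum.remove)

lemma phi_step:
  assumes "finite E" "e0 \<in> E" "0 \<le> p" "p < 1/2"
  shows "p * phi p R E k (h @ [(e0, (e0 \<in> R) \<noteq> True)]) + (1-p) * phi p R E k (h @ [(e0, (e0 \<in> R) \<noteq> False)])
         \<le> phi p R E k h"
proof -
  define S where "S = (\<Sum>e\<in>E-{e0}. (2-2*p)^ncount e (e\<notin>R) h * (1/(2-2*p))^ncount e (e\<in>R) h * sp p ^ (k - cnt e h))"
  define w where "w = ncount e0 (e0\<notin>R) h"
  define r where "r = ncount e0 (e0\<in>R) h"
  define c where "c = cnt e0 h"
  have hT: "phi p R E k (h @ [(e0, (e0 \<in> R) \<noteq> True)]) = (2-2*p)^(w+1) * (1/(2-2*p))^r * sp p ^ (k - (c+1)) + S"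
    unfolding phi_split[OF assms(1,2)] S_def w_def r_def c_def by (simp add: ncount_def cnt_def)
  have hF: "phi p R E k (h @ [(e0, (e0 \<in> R) \<noteq> False)]) = (2-2*p)^w * (1/(2-2*p))^(r+1) * sp p ^ (k - (c+1)) + S"
    unfolding phi_split[OF assms(1,2)] S_def w_def r_def c_def by (simp add: ncount_def cnt_def)
  have h0: "phi p R E k h = (2-2*p)^w * (1/(2-2*p))^r * sp p ^ (k - c) + S"
    unfolding phi_split0[OF assms(1,2)] S_def w_def r_def c_def by simp
  have key: "p*(2-2*p) + (1-p)*(1/(2-2*p)) = sp p"
    using assms(4) unfolding sp_def by (simp add: field_simps)
  have "p * ((2-2*p)^(w+1) * (1/(2-2*p))^r * sp p ^ (k - (c+1))) + (1-p) * ((2-2*p)^w * (1/(2-2*p))^(r+1) * sp p ^ (k - (c+1)))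
        \<le> (2-2*p)^w * (1/(2-2*p))^r * sp p ^ (k - c)"
    using sp_bounds[OF assms(3,4)] assms(3,4) key by (intro step_ineq) auto
  then show ?thesis unfolding hT hF h0 by (simp add: algebra_simps)
qed

lemma bound:
  assumes g: "is_graph V E" "R \<subseteq> E" "connected_on V R" and p: "0 \<le> p" "p < 1/2"
    and "(\<Sum>e\<in>E. kk p (card E) - cnt e h) \<le> B"
  shows "measure_pmf.prob (run_alg p V E R (myalg p) B h) (- {Some T | T. spanning_tree V E T \<and> T \<subseteq> R})
           \<le> phi p R E (kk p (card E)) h"
  using assms(6)
proof (induction B arbitrary: h)
  have fE: "finite E" using g(1) unfolding is_graph_def by (meson finite_Pow_iff finite_subset subsetI PowI)
  case 0
  then have all: "\<forall>e\<in>E. kk p (card E) \<le> cnt e h" using fE by auto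
  show ?case
  proof (cases "stepf p V E h")
    case (Query e0)
    have "e0 \<in> E" "cnt e0 h < kk p (card E)" using query_props[OF Query] by auto
    then have False using all by (meson not_le)
    then show ?thesis ..
  next
    case (Output T)
    then show ?thesis unfolding run_zero using output_case[OF g p Output] by simp
  qed
next
  have fE: "finite E" using g(1) unfolding is_graph_def by (meson finite_Pow_iff finite_subset subsetI PowI)
  case (Suc B)
  show ?case
  proof (cases "stepf p V E h")
    case (Query e0)
    note q = query_props[OF Query]
    have IH: "measure_pmf.prob (run_alg p V E R (myalg p) B (h @ [(e0, b)])) (- {Some T | T. spanning_tree V E T \<and> T \<subseteq> R})
           \<le> phi p R E (kk p (card E)) (h @ [(e0, b)])" for b
    proof -
      have "(\<Sum>e\<in>E. kk p (card E) - cnt e (h @ [(e0,b)])) + 1 = (\<Sum>e\<in>E. kk p (card E) - cnt e h)"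
        using sum_dec[OF fE q] .
      then have "(\<Sum>e\<in>E. kk p (card E) - cnt e (h @ [(e0,b)])) \<le> B" using Suc.prems by linarith
      then show ?thesis by (rule Suc.IH)
    qed
    have "measure_pmf.prob (run_alg p V E R (myalg p) (Suc B) h) (- {Some T | T. spanning_tree V E T \<and> T \<subseteq> R})
      = p * measure_pmf.prob (run_alg p V E R (myalg p) B (h @ [(e0, (e0 \<in> R) \<noteq> True)])) (- {Some T | T. spanning_tree V E T \<and> T \<subseteq> R})
        + (1-p) * measure_pmf.prob (run_alg p V E R (myalg p) B (h @ [(e0, (e0 \<in> R) \<noteq> False)])) (- {Some T | T. spanning_tree V E T \<and> T \<subseteq> R})"
      unfolding run_suc Query using p by (simp only: step.case) (rule prob_bind_bern; simp)
    also have "\<dots> \<le> p * phi p R E (kk p (card E)) (h @ [(e0, (e0 \<in> R) \<noteq> True)]) + (1-p) * phi p R E (kk p (card E)) (h @ [(e0, (e0 \<in> R) \<noteq> False)])"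
      using p by (intro add_mono mult_left_mono IH) auto
    also have "\<dots> \<le> phi p R E (kk p (card E)) h" by (rule phi_step[OF fE q(1) p])
    finally show ?thesis .
  next
    case (Output T)
    then show ?thesis unfolding run_suc using output_case[OF g p Output] by simp
  qed
qed


lemma cc_pos: assumes "0 \<le> p" "p < 1/2" shows "0 < cc p" "ln (sp p) < 0"
proof -
  show l: "ln (sp p) < 0" using sp_bounds[OF assms] by simp
  then show "0 < cc p" unfolding cc_def by (simp add: divide_neg_neg)
qed

lemma delta_bound:
  assumes "0 \<le> p" "p < 1/2" "1 \<le> m"
  shows "real m * sp p ^ kk p m \<le> 1 / real m"
proof -
  let ?s = "sp p"
  have s: "0 < ?s" "?s < 1" using sp_bounds[OF assms(1,2)] by auto
  have m: "0 < real m" using assms(3) by simp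
  have "cc p * ln (real m) \<le> real (kk p m)" unfolding kk_def by (rule real_nat_ceiling_ge)
  then have "?s powr real (kk p m) \<le> ?s powr (cc p * ln (real m))"
    using s by (intro powr_mono') auto
  also have "?s powr (cc p * ln (real m)) = exp (cc p * ln (real m) * ln ?s)"
    using s by (simp add: powr_def)
  also have "cc p * ln (real m) * ln ?s = -2 * ln (real m)"
    using cc_pos[OF assms(1,2)] unfolding cc_def by (simp add: field_simps)
  also have "exp (-2 * ln (real m)) = real m powr (-2)" using m by (simp add: powr_def)
  also have "\<dots> = 1 / real m ^ 2" using m by (simp add: powr_neg_numeral)
  finally have "?s ^ kk p m \<le> 1 / real m ^ 2" using s by (simp add: powr_realpow)
  then have "real m * ?s ^ kk p m \<le> real m * (1 / real m ^ 2)" using m by (intro mult_left_mono) auto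
  also have "\<dots> = 1 / real m" using m by (simp add: power2_eq_square)
  finally show ?thesis .
qed

lemma budget:
  assumes "0 \<le> p" "p < 1/2" "3 \<le> m"
  shows "m * kk p m \<le> nat \<lfloor>(cc p + 1) * real m * ln (real m)\<rfloor>"
proof -
  have m: "3 \<le> real m" using assms(3) by simp
  have "exp 1 \<le> real m" using e_less_272 m by simp
  then have "ln (exp 1) \<le> ln (real m)" using m by (subst ln_le_cancel_iff) auto
  then have l1: "1 \<le> ln (real m)" by simp
  have c: "0 < cc p" using cc_pos[OF assms(1,2)] by simp
  have nn: "0 \<le> cc p * ln (real m)" using c l1 by simp
  have "real (kk p m) = of_int \<lceil>cc p * ln (real m)\<rceil>" unfolding kk_def using nn by simp
  also have "\<dots> \<le> cc p * ln (real m) + 1" by (rule of_int_ceiling_le_add_one)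
  finally have k: "real (kk p m) \<le> cc p * ln (real m) + 1" .
  have "real (m * kk p m) = real m * real (kk p m)" by simp
  also have "\<dots> \<le> real m * (cc p * ln (real m) + 1)" using k m by (intro mult_left_mono) auto
  also have "\<dots> \<le> real m * (cc p * ln (real m) + ln (real m))" using l1 m by (intro mult_left_mono) auto
  also have "\<dots> = (cc p + 1) * real m * ln (real m)" by (simp add: algebra_simps)
  finally show ?thesis by (rule le_nat_floor)
qed

theorem lemma1:
  fixes p :: real
  assumes "0 \<le> p" and "p < 1/2"
  shows "\<exists>(alg :: algorithm) (C :: real) (\<delta> :: nat \<Rightarrow> real) (N :: nat).
           \<delta> \<longlonglongrightarrow> 0 \<and>
           (\<forall>V E R. is_graph V E \<and> card E \<ge> N \<and> R \<subseteq> E \<and> connected_on V R \<longrightarrow>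
              (let D = run_alg p V E R alg (nat \<lfloor>C * real (card E) * ln (real (card E))\<rfloor>) []
               in measure_pmf.prob D {None} = 0 \<and>
                  measure_pmf.prob D {Some T | T. spanning_tree V E T \<and> T \<subseteq> R}
                    \<ge> 1 - \<delta> (card E)))"
proof -
  let ?d = "\<lambda>m. real m * sp p ^ kk p m"
  have lim: "?d \<longlonglongrightarrow> 0"
  proof (rule tendsto_sandwich[OF _ _ tendsto_const lim_inverse_n'])
    show "\<forall>\<^sub>F n in sequentially. 0 \<le> ?d n" using sp_bounds[OF assms] by simp
    have "\<forall>n\<ge>1. ?d n \<le> 1 / real n" using delta_bound[OF assms] by blast
    then show "\<forall>\<^sub>F n in sequentially. ?d n \<le> 1 / real n"
      unfolding eventually_sequentially by blast
  qed
  have main: "let D = run_alg p V E R (myalg p) (nat \<lfloor>(cc p + 1) * real (card E) * ln (real (card E))\<rfloor>) []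
               in measure_pmf.prob D {None} = 0 \<and>
                  measure_pmf.prob D {Some T | T. spanning_tree V E T \<and> T \<subseteq> R}
                    \<ge> 1 - ?d (card E)"
    if h: "is_graph V E \<and> 3 \<le> card E \<and> R \<subseteq> E \<and> connected_on V R" for V E R
  proof -
  have fE: "finite E" using h unfolding is_graph_def by (meson finite_Pow_iff finite_subset subsetI PowI)
  define B where "B = nat \<lfloor>(cc p + 1) * real (card E) * ln (real (card E))\<rfloor>"
  have sum0: "(\<Sum>e\<in>E. kk p (card E) - cnt e []) = card E * kk p (card E)" by (simp add: cnt_def)
  have bud: "(\<Sum>e\<in>E. kk p (card E) - cnt e []) \<le> B" unfolding sum0 B_def using budget[OF assms] h by simp
  let ?D = "run_alg p V E R (myalg p) B []"
  let ?G = "{Some T | T. spanning_tree V E T \<and> T \<subseteq> R}"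
  have n: "measure_pmf.prob ?D {None} = 0"
    using no_none[OF fE bud] by (simp add: measure_pmf_zero_iff)
  have phi0: "phi p R E (kk p (card E)) [] = ?d (card E)"
    unfolding phi_def by (simp add: ncount_def cnt_def)
  have "measure_pmf.prob ?D (- ?G) \<le> ?d (card E)"
    using bound[of V E R p "[]" B] h assms bud phi0 by simp
  moreover have "measure_pmf.prob ?D (- ?G) = 1 - measure_pmf.prob ?D ?G"
    using measure_pmf.prob_compl[of ?G ?D] by (simp add: Compl_eq_Diff_UNIV)
  ultimately have "1 - ?d (card E) \<le> measure_pmf.prob ?D ?G" by simp
  with n show ?thesis unfolding B_def Let_def by simp
  qed
  show ?thesis
    apply (rule exI[of _ "myalg p"], rule exI[of _ "cc p + 1"], rule exI[of _ ?d], rule exI[of _ 3])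
    using lim main by blast
qed

end
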